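(* In the ring $\mathbb{Q}(a,b)[[q]]$ of formal power series in $q$ with coefficients rational functions of $a,b$, \[ 1+\sum_{n=1}^{\infty}\frac{q^{n}}{(aq;q)_n\,(bq;q)_n} =(1-a^{-1})\left(1+\sum_{n=1}^{\infty}\frac{(-1)^{n}q^{\binom{n+1}{2}}b^{n}a^{-n}}{(bq;q)_n}\right) +a^{-1}\sum_{n=0}^{\infty}(-1)^{n}q^{\binom{n+1}{2}}b^{n}a^{-n}\prod_{k=1}^{\infty}\frac{1}{(1-aq^{k})(1-bq^{k})}. \]
   Context: For an indeterminate or element $p$ and $n\ge 0$, $(p;q)_n=(1-p)(1-pq)\cdots(1-pq^{n-1})$, so $(aq;q)_n=(1-aq)(1-aq^2)\cdots(1-aq^n)$. *)

theory Defs
  imports "HOL-Analysis.Analysis" "HOL-Computational_Algebra.Formal_Power_Series"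
    "HOL-Computational_Algebra.Fraction_Field" "HOL-Computational_Algebra.Polynomial"
begin

text \<open>Q(a,b) as the fraction field of Q[a][b]: rat poly poly, inner variable a, outer b.\<close>
type_synonym ratfun = "rat poly poly fract"

definition var_a :: ratfun where "var_a = Fract [:[:0, 1:]:] 1"
definition var_b :: ratfun where "var_b = Fract [:0, 1:] 1"

definition qpoch :: "'a::comm_ring_1 fps \<Rightarrow> nat \<Rightarrow> 'a fps" where
  "qpoch p n = (\<Prod>j<n. 1 - p * fps_X ^ j)"

end

theory Submission imports Defs begin

definition ordge :: "'a::comm_ring_1 fps \<Rightarrow> nat \<Rightarrow> bool" where
  "ordge f e \<longleftrightarrow> (\<forall>i<e. fps_nth f i = 0)"

lemma ordge_mono: "ordge f e \<Longrightarrow> e' \<le> e \<Longrightarrow> ordge f e'"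
  by (auto simp: ordge_def)

lemma ordge_0[simp]: "ordge f 0" by (simp add: ordge_def)
lemma ordge_zero[simp]: "ordge 0 e" by (simp add: ordge_def)

lemma ordge_add: "ordge f e \<Longrightarrow> ordge g e \<Longrightarrow> ordge (f + g) e"
  by (auto simp: ordge_def)
lemma ordge_diff: "ordge f e \<Longrightarrow> ordge g e \<Longrightarrow> ordge (f - g) e"
  by (auto simp: ordge_def)
lemma ordge_uminus: "ordge f e \<Longrightarrow> ordge (- f) e"
  by (auto simp: ordge_def)
lemma ordge_sum: "(\<And>x. x \<in> A \<Longrightarrow> ordge (f x) e) \<Longrightarrow> ordge (sum f A) e"
  by (induction A rule: infinite_finite_induct) (auto intro: ordge_add)

lemma ordge_mult: "ordge f e1 \<Longrightarrow> ordge g e2 \<Longrightarrow> ordge (f * g) (e1 + e2)"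
  unfolding ordge_def fps_mult_nth
proof (intro allI impI sum.neutral ballI)
  fix i j assume *: "\<forall>i<e1. fps_nth f i = 0" "\<forall>i<e2. fps_nth g i = 0" "i < e1 + e2" "j \<in> {0..i}"
  show "fps_nth f j * fps_nth g (i - j) = 0"
  proof (cases "j < e1")
    case True thus ?thesis using * by simp
  next
    case False thus ?thesis using * by auto
  qed
qed

lemma ordge_X: "ordge (fps_X ^ e :: 'a::comm_ring_1 fps) e"
  by (simp add: ordge_def fps_X_power_nth)

lemma ordge_mult_left: "ordge g e \<Longrightarrow> ordge (f * g) e"
  using ordge_mult[of f 0 g e] by simp
lemma ordge_mult_right: "ordge f e \<Longrightarrow> ordge (f * g) e"
  using ordge_mult[of f e g 0] by simp

definition iq :: "'a::field \<Rightarrow> nat \<Rightarrow> 'a fps" where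
  "iq c n = inverse (qpoch (fps_const c * fps_X) n)"

lemma qpoch_Suc: "qpoch p (Suc n) = qpoch p n * (1 - p * fps_X ^ n)"
  by (simp add: qpoch_def)

lemma qpoch_nth0: "fps_nth (qpoch (fps_const c * fps_X) n) 0 = (1::'a::field)"
  by (induction n) (simp_all add: qpoch_def)

lemma iq_0[simp]: "iq c 0 = 1" by (simp add: iq_def qpoch_def)

lemma iq_Suc: "iq c (Suc n) = iq c n * inverse (1 - fps_const c * fps_X ^ Suc n)"
  by (simp add: iq_def qpoch_Suc fps_inverse_mult mult.assoc)

lemma inv_lin: "inverse (1 - fps_const (c::'a::field) * fps_X ^ Suc n) * (1 - fps_const c * fps_X ^ Suc n) = 1"
  by (rule inverse_mult_eq_1) simp

lemma alg1:
  fixes u w ca cb cia x y A B :: "'a::comm_ring_1"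
  assumes h1: "u*(1 - ca*x) = 1" and h2: "w*(1-cb*y) = 1" and h3: "cia*ca = 1"
  shows "x*(A*u)*(B*w) = cia*(A*u*(B*w) - A*B) - cb*cia*y*(A*(B*w))"
proof -
  have u: "u - 1 = u*ca*x" using h1 by (simp add: algebra_simps)
  have w: "w - 1 = w*cb*y" using h2 by (simp add: algebra_simps)
  have "cia*(A*u*(B*w) - A*B) - cb*cia*y*(A*(B*w)) = cia*A*B*((u - 1)*w + (w - 1) - cb*y*w)"
    by (simp add: algebra_simps)
  also have "\<dots> = cia*A*B*(u*ca*x*w)" by (simp add: u w algebra_simps)
  also have "\<dots> = (cia*ca)*(x*(A*u)*(B*w))" by (simp add: ac_simps)
  finally show ?thesis using h3 by simp
qed

lemma alg0:
  fixes u ca cia x v :: "'a::comm_ring_1"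
  assumes h1: "u*(1 - ca*x) = 1" and h3: "cia*ca = 1"
  shows "x * u * v = cia * (u * v - v)"
proof -
  have u: "u - 1 = u*ca*x" using h1 by (simp add: algebra_simps)
  have "cia * (u * v - v) = cia * ((u - 1) * v)" by (simp add: algebra_simps)
  also have "\<dots> = (cia*ca)*(x * u * v)" by (simp add: u ac_simps)
  finally show ?thesis using h3 by simp
qed

definition Y :: "'a::field \<Rightarrow> 'a \<Rightarrow> nat \<Rightarrow> nat \<Rightarrow> 'a fps" where
  "Y a b k N = (\<Sum>n<N. fps_X ^ Suc n * iq a (Suc n) * iq b (Suc n + k))"

lemma Y_Suc: "Y a b k (Suc N) = Y a b k N + fps_X ^ Suc N * iq a (Suc N) * iq b (Suc N + k)"
  by (simp add: Y_def)

lemma cia: "(a::'a::field) \<noteq> 0 \<Longrightarrow> fps_const (inverse a) * fps_const a = 1"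
  by simp

lemma Y_rec:
  assumes a: "(a::'a::field) \<noteq> 0"
  shows "Y a b k (Suc N) = fps_const (inverse a) * (iq a (Suc N) * iq b (Suc N + k) - iq b (Suc k))
     - fps_const b * fps_const (inverse a) * fps_X ^ Suc k * Y a b (Suc k) N"
proof (induction N arbitrary: k)
  case 0
  have "Y a b k (Suc 0) = fps_X ^ Suc 0 * iq a (Suc 0) * iq b (Suc k)" by (simp add: Y_def)
  also have "\<dots> = fps_const (inverse a) * (iq a (Suc 0) * iq b (Suc k) - iq b (Suc k))"
    unfolding iq_Suc[of a 0] iq_0 mult_1_left
    by (rule alg0[OF inv_lin cia[OF a]])
  finally show ?case by (simp add: Y_def)
next
  case (Suc N)
  define U where "U = inverse (1 - fps_const a * fps_X ^ Suc (Suc N))"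
  define W where "W = inverse (1 - fps_const b * fps_X ^ Suc (Suc N + k))"
  define A where "A = iq a (Suc N)"
  define B where "B = iq b (Suc N + k)"
  have ia: "iq a (Suc (Suc N)) = A * U" unfolding A_def U_def by (rule iq_Suc)
  have ib: "iq b (Suc (Suc N) + k) = B * W" "iq b (Suc N + Suc k) = B * W"
    unfolding B_def W_def using iq_Suc[of b "Suc N + k"] by simp_all
  have T: "fps_X ^ Suc (Suc N) * (A * U) * (B * W) = fps_const (inverse a) * (A * U * (B * W) - A * B)
     - fps_const b * fps_const (inverse a) * fps_X ^ Suc (Suc N + k) * (A * (B * W))"
    unfolding U_def W_def
    by (rule alg1[OF inv_lin inv_lin cia[OF a]])
  have Xe: "fps_X ^ Suc (Suc N + k) = (fps_X ^ Suc k * fps_X ^ Suc N :: 'a fps)"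
    by (simp add: power_add[symmetric])
  have Y1: "Y a b (Suc k) (Suc N) = Y a b (Suc k) N + fps_X ^ Suc N * A * (B * W)"
    using Y_Suc[of a b "Suc k" N] ib(2) A_def by simp
  have "Y a b k (Suc (Suc N)) = Y a b k (Suc N) + fps_X ^ Suc (Suc N) * (A * U) * (B * W)"
    using Y_Suc[of a b k "Suc N"] ia ib by simp
  also note T
  also note Suc.IH[of k]
  finally show ?case
    unfolding ia ib Y1 A_def[symmetric] B_def[symmetric] Xe
    by (simp add: algebra_simps)
qed

lemma choose2_Suc: "Suc (Suc j) choose 2 = Suc j + (Suc j choose 2)"
  by (simp add: numeral_2_eq_2)

definition ee :: "'a::field \<Rightarrow> 'a \<Rightarrow> nat \<Rightarrow> nat \<Rightarrow> 'a fps" where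
  "ee a b k j = fps_const ((-1)^j * b^j * inverse a^j) * fps_X ^ (j*k + (Suc j choose 2))"

lemma ee_0[simp]: "ee a b k 0 = 1" by (simp add: ee_def numeral_2_eq_2)

lemma ee_Suc: "ee a b k (Suc j) = - (fps_const b * fps_const (inverse a) * fps_X ^ Suc k * ee a b (Suc k) j)"
proof -
  have "Suc j * k + (Suc (Suc j) choose 2) = Suc k + (j * Suc k + (Suc j choose 2))"
    by (simp add: choose2_Suc)
  hence "fps_X ^ (Suc j * k + (Suc (Suc j) choose 2)) = (fps_X ^ Suc k * fps_X ^ (j * Suc k + (Suc j choose 2)) :: 'a fps)"
    by (simp add: power_add[symmetric])
  thus ?thesis by (simp add: ee_def algebra_simps)
qed

lemma Y_closed:
  assumes a: "(a::'a::field) \<noteq> 0"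
  shows "Y a b k N = fps_const (inverse a) * (\<Sum>j<N. ee a b k j * (iq a (N - j) * iq b (N + k) - iq b (k + j + 1)))"
proof (induction N arbitrary: k)
  case 0
  then show ?case by (simp add: Y_def)
next
  case (Suc N)
  have C: "(\<Sum>j<Suc N. ee a b k j * (iq a (Suc N - j) * iq b (Suc N + k) - iq b (k + j + 1)))
     = (iq a (Suc N) * iq b (Suc N + k) - iq b (Suc k)) +
       (\<Sum>j<N. - (fps_const b * fps_const (inverse a) * fps_X ^ Suc k) * (ee a b (Suc k) j * (iq a (N - j) * iq b (N + Suc k) - iq b (Suc k + j + 1))))"
    by (subst sum.lessThan_Suc_shift) (simp add: ee_Suc algebra_simps)
  also have "\<dots> = (iq a (Suc N) * iq b (Suc N + k) - iq b (Suc k)) -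
       (fps_const b * fps_const (inverse a) * fps_X ^ Suc k) * (\<Sum>j<N. ee a b (Suc k) j * (iq a (N - j) * iq b (N + Suc k) - iq b (Suc k + j + 1)))"
    by (simp add: sum_distrib_left sum_negf)
  finally have C' : "(\<Sum>j<Suc N. ee a b k j * (iq a (Suc N - j) * iq b (Suc N + k) - iq b (k + j + 1))) = (iq a (Suc N) * iq b (Suc N + k) - iq b (Suc k)) -
       (fps_const b * fps_const (inverse a) * fps_X ^ Suc k) * (\<Sum>j<N. ee a b (Suc k) j * (iq a (N - j) * iq b (N + Suc k) - iq b (Suc k + j + 1)))" .
  have "Y a b k (Suc N) = fps_const (inverse a) * ((iq a (Suc N) * iq b (Suc N + k) - iq b (Suc k)) -
       (fps_const b * fps_const (inverse a) * fps_X ^ Suc k) * (\<Sum>j<N. ee a b (Suc k) j * (iq a (N - j) * iq b (N + Suc k) - iq b (Suc k + j + 1))))"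
    unfolding Y_rec[OF a] Suc.IH[of "Suc k"] by (simp only: algebra_simps)
  then show ?case using C' by simp
qed

lemma ee0_Suc: "ee a b 0 (Suc j) = - (fps_const b * fps_const (inverse a) * fps_X ^ Suc j * ee a b 0 j)"
proof -
  have "fps_X ^ (Suc (Suc j) choose 2) = (fps_X ^ Suc j * fps_X ^ (Suc j choose 2) :: 'a fps)"
    by (simp add: power_add[symmetric] choose2_Suc)
  thus ?thesis by (simp add: ee_def algebra_simps)
qed

lemma le_choose2: "j \<le> Suc j choose 2"
  by (induction j) (simp_all add: choose2_Suc)

lemma ordge_ee: "ordge (ee a b k j) (Suc j choose 2)"
  unfolding ee_def by (rule ordge_mult_left, rule ordge_mono[OF ordge_X]) simp

lemma inv_rel: "inverse (1 - fps_const (c::'a::field) * fps_X ^ Suc n) - 1 = inverse (1 - fps_const c * fps_X ^ Suc n) * fps_const c * fps_X ^ Suc n"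
proof -
  have "inverse (1 - fps_const (c::'a::field) * fps_X ^ Suc n) * (1 - fps_const c * fps_X ^ Suc n) = 1" by (rule inv_lin)
  thus ?thesis by (simp add: algebra_simps)
qed

lemma I2:
  assumes a: "(a::'a::field) \<noteq> 0"
  shows "(\<Sum>k<N. (1 - fps_const (inverse a)) * ee a b 0 k * iq b k + fps_const (inverse a) * ee a b 0 k * iq b (Suc k))
     = 1 - ee a b 0 N * iq b N"
proof (induction N)
  case 0 thus ?case by simp
next
  case (Suc N)
  define w where "w = inverse (1 - fps_const b * fps_X ^ Suc N)"
  have w: "w - 1 = w * fps_const b * fps_X ^ Suc N" unfolding w_def by (rule inv_rel)
  have ib: "iq b (Suc N) = iq b N * w" unfolding w_def by (rule iq_Suc)
  have cc: "fps_const (inverse a) * fps_const a = 1" using a by simp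
  have "(1 - fps_const (inverse a)) * ee a b 0 N * iq b N + fps_const (inverse a) * ee a b 0 N * iq b (Suc N)
     = ee a b 0 N * iq b N + fps_const (inverse a) * ee a b 0 N * iq b N * (w - 1)"
    unfolding ib by (simp add: algebra_simps)
  also have "\<dots> = ee a b 0 N * iq b N - ee a b 0 (Suc N) * iq b (Suc N)"
    unfolding w ee0_Suc ib by (simp add: algebra_simps)
  finally show ?case using Suc.IH by simp
qed

lemma iq_diff:
  assumes "r \<le> N"
  shows "ordge (iq (a::'a::field) r - iq a N) (Suc r)"
  using assms
proof (induction N rule: dec_induct)
  case base thus ?case by simp
next
  case (step n)
  define u where "u = inverse (1 - fps_const a * fps_X ^ Suc n)"
  have u: "u - 1 = u * fps_const a * fps_X ^ Suc n" unfolding u_def by (rule inv_rel)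
  have eq: "iq a r - iq a (Suc n) = (iq a r - iq a n) - fps_X ^ Suc n * (iq a n * u * fps_const a)"
  proof -
    have "iq a r - iq a (Suc n) = (iq a r - iq a n) - iq a n * (u - 1)"
      unfolding iq_Suc u_def[symmetric] by (simp add: algebra_simps)
    also have "\<dots> = (iq a r - iq a n) - fps_X ^ Suc n * (iq a n * u * fps_const a)"
      unfolding u by (simp add: ac_simps)
    finally show ?thesis .
  qed
  have o: "ordge (fps_X ^ Suc n * (iq a n * u * fps_const a)) (Suc r)"
    by (rule ordge_mult_right, rule ordge_mono[OF ordge_X]) (use step in simp)
  show ?case unfolding eq by (rule ordge_diff[OF step.IH o])
qed

lemma core:
  assumes a: "(a::'a::field) \<noteq> 0"
  shows "ordge ((1 + Y a b 0 N) - (fps_const (1 - inverse a) * (\<Sum>n<Suc N. ee a b 0 n * iq b n)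
            + fps_const (inverse a) * (\<Sum>n<N. ee a b 0 n) * (iq a N * iq b N))) N"
proof -
  define c where "c = fps_const (inverse a)"
  define S1 where "S1 = (\<Sum>j<N. ee a b 0 j * iq b j)"
  define S2 where "S2 = (\<Sum>j<N. ee a b 0 j * iq b (Suc j))"
  define S3 where "S3 = (\<Sum>j<N. ee a b 0 j * iq a (N - j) * iq b N)"
  define S4 where "S4 = (\<Sum>j<N. ee a b 0 j)"
  define eN where "eN = ee a b 0 N * iq b N"
  define AB where "AB = iq a N * iq b N"
  have "S3 - S2 = (\<Sum>j<N. ee a b 0 j * (iq a (N - j) * iq b (N + 0) - iq b (0 + j + 1)))"
    unfolding S3_def S2_def sum_subtractf[symmetric] by (rule sum.cong) (simp_all add: algebra_simps)
  hence Y0: "Y a b 0 N = c * (S3 - S2)" using Y_closed[OF a, of b 0 N] by (simp add: c_def)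
  have "(1 - c) * S1 + c * S2 = (\<Sum>k<N. (1 - fps_const (inverse a)) * ee a b 0 k * iq b k + fps_const (inverse a) * ee a b 0 k * iq b (Suc k))"
    by (simp add: S1_def S2_def c_def sum.distrib sum_distrib_left mult.assoc)
  hence I: "(1 - c) * S1 + c * S2 = 1 - eN" using I2[OF a, of b N] by (simp add: eN_def)
  have R: "(\<Sum>n<Suc N. ee a b 0 n * iq b n) = S1 + eN" by (simp add: S1_def eN_def)
  have E: "S3 - S4 * AB = (\<Sum>j<N. ee a b 0 j * (iq a (N - j) - iq a N) * iq b N)"
    unfolding S3_def S4_def AB_def sum_distrib_right sum_subtractf[symmetric]
    by (rule sum.cong) (simp_all add: algebra_simps)
  have fc: "fps_const (1 - inverse a) = 1 - c"
    by (simp add: c_def fps_const_sub[symmetric])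
  have "(1 + Y a b 0 N) - (fps_const (1 - inverse a) * (\<Sum>n<Suc N. ee a b 0 n * iq b n)
            + fps_const (inverse a) * (\<Sum>n<N. ee a b 0 n) * (iq a N * iq b N))
     = (1 - ((1 - c) * S1 + c * S2 + eN)) + c * eN + c * (S3 - S4 * AB)"
    unfolding Y0 R fc c_def[symmetric] S4_def[symmetric] AB_def[symmetric] by (simp add: algebra_simps)
  also have "\<dots> = c * (ee a b 0 N * iq b N) + c * (\<Sum>j<N. ee a b 0 j * (iq a (N - j) - iq a N) * iq b N)"
    unfolding I E eN_def by simp
  finally have D: "(1 + Y a b 0 N) - (fps_const (1 - inverse a) * (\<Sum>n<Suc N. ee a b 0 n * iq b n)
            + fps_const (inverse a) * (\<Sum>n<N. ee a b 0 n) * (iq a N * iq b N)) = 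
      c * (ee a b 0 N * iq b N) + c * (\<Sum>j<N. ee a b 0 j * (iq a (N - j) - iq a N) * iq b N)" .
  have o1: "ordge (c * (ee a b 0 N * iq b N)) N"
    by (rule ordge_mult_left, rule ordge_mult_right, rule ordge_mono[OF ordge_ee le_choose2])
  have o2: "ordge (c * (\<Sum>j<N. ee a b 0 j * (iq a (N - j) - iq a N) * iq b N)) N"
  proof (rule ordge_mult_left, rule ordge_sum, rule ordge_mult_right)
    fix j assume j: "j \<in> {..<N}"
    have "ordge (ee a b 0 j * (iq a (N - j) - iq a N)) ((Suc j choose 2) + Suc (N - j))"
      by (intro ordge_mult ordge_ee iq_diff) simp
    thus "ordge (ee a b 0 j * (iq a (N - j) - iq a N)) N"
      by (rule ordge_mono) (use le_choose2[of j] j in simp)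
  qed
  show ?thesis unfolding D by (rule ordge_add[OF o1 o2])
qed

definition stab :: "(nat \<Rightarrow> 'a::comm_ring_1 fps) \<Rightarrow> bool" where
  "stab F \<longleftrightarrow> (\<forall>m N. m < N \<longrightarrow> fps_nth (F N) m = fps_nth (F (Suc m)) m)"

lemma stabI:
  assumes "\<And>n. ordge (F (Suc n) - F n) n"
  shows "stab F"
  unfolding stab_def
proof (intro allI impI)
  fix m N :: nat assume "m < N"
  hence "Suc m \<le> N" by simp
  thus "fps_nth (F N) m = fps_nth (F (Suc m)) m"
  proof (induction N rule: dec_induct)
    case base thus ?case by simp
  next
    case (step n)
    have "fps_nth (F (Suc n) - F n) m = 0" using assms[of n] step(1) by (simp add: ordge_def)
    thus ?case using step by simp
  qed
qed

lemma stab_sum: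
  assumes "\<And>n. ordge (f n) n"
  shows "stab (\<lambda>N. \<Sum>n<N. f n)"
  by (rule stabI) (simp add: assms)

lemma stab_lim:
  assumes "stab F"
  shows "F \<longlonglongrightarrow> Abs_fps (\<lambda>m. fps_nth (F (Suc m)) m)"
proof (rule tendsto_fpsI)
  fix n
  show "\<forall>\<^sub>F x in sequentially. fps_nth (F x) n = fps_nth (Abs_fps (\<lambda>m. fps_nth (F (Suc m)) m)) n"
    unfolding eventually_sequentially
  proof (intro exI[of _ "Suc n"] allI impI)
    fix N assume "Suc n \<le> N"
    hence "n < N" by simp
    thus "fps_nth (F N) n = fps_nth (Abs_fps (\<lambda>m. fps_nth (F (Suc m)) m)) n"
      using assms unfolding stab_def fps_nth_Abs_fps by blast
  qed
qed

definition agree :: "nat \<Rightarrow> 'a::comm_ring_1 fps \<Rightarrow> 'a fps \<Rightarrow> bool" where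
  "agree m f g \<longleftrightarrow> (\<forall>i\<le>m. fps_nth f i = fps_nth g i)"

lemma agree_refl: "agree m f f" by (simp add: agree_def)
lemma agree_add: "agree m f f' \<Longrightarrow> agree m g g' \<Longrightarrow> agree m (f + g) (f' + g')"
  by (simp add: agree_def)
lemma agree_mult:
  assumes A: "agree m f f'" and B: "agree m g g'"
  shows "agree m (f * g) (f' * g')"
  unfolding agree_def
proof (intro allI impI)
  fix i assume i: "i \<le> m"
  show "fps_nth (f * g) i = fps_nth (f' * g') i"
    unfolding fps_mult_nth
  proof (rule sum.cong[OF refl])
    fix j assume "j \<in> {0..i}"
    hence "j \<le> m" "i - j \<le> m" using i by auto
    thus "fps_nth f j * fps_nth g (i - j) = fps_nth f' j * fps_nth g' (i - j)"
      using A B unfolding agree_def by simp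
  qed
qed
lemma agree_stab:
  assumes "stab F"
  shows "agree m (Abs_fps (\<lambda>m. fps_nth (F (Suc m)) m)) (F (Suc m))"
  unfolding agree_def fps_nth_Abs_fps
proof (intro allI impI)
  fix i assume "i \<le> m"
  hence "i < Suc m" by simp
  thus "fps_nth (F (Suc i)) i = fps_nth (F (Suc m)) i"
    using assms unfolding stab_def by (metis (no_types))
qed

theorem mainTheorem1:
  fixes a b :: ratfun
  defines "a \<equiv> var_a" and "b \<equiv> var_b"
  defines "L \<equiv> (\<lambda>n::nat. fps_X ^ n * inverse (qpoch (fps_const a * fps_X) n * qpoch (fps_const b * fps_X) n))"
      and "R1 \<equiv> (\<lambda>n::nat. fps_const ((-1) ^ n * b ^ n * inverse a ^ n) * fps_X ^ ((n + 1) choose 2) * inverse (qpoch (fps_const b * fps_X) n))"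
      and "R2 \<equiv> (\<lambda>n::nat. fps_const ((-1) ^ n * b ^ n * inverse a ^ n) * fps_X ^ ((n + 1) choose 2))"
      and "P \<equiv> (\<lambda>N::nat. \<Prod>k\<in>{1..N}. inverse ((1 - fps_const a * fps_X ^ k) * (1 - fps_const b * fps_X ^ k)))"
  shows "summable (\<lambda>n. L (Suc n)) \<and> summable (\<lambda>n. R1 (Suc n)) \<and> summable R2 \<and> convergent P \<and>
    1 + (\<Sum>n. L (Suc n)) =
      fps_const (1 - inverse a) * (1 + (\<Sum>n. R1 (Suc n)))
      + fps_const (inverse a) * (\<Sum>n. R2 n) * lim P"
proof -
  have a0: "a \<noteq> 0" unfolding a_def var_a_def by (simp add: Zero_fract_def eq_fract)
  have Lf: "\<And>n. L n = fps_X ^ n * iq a n * iq b n"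
    by (simp add: L_def iq_def fps_inverse_mult mult.assoc)
  have R1f: "\<And>n. R1 n = ee a b 0 n * iq b n" by (simp add: R1_def ee_def iq_def)
  have R2f: "\<And>n. R2 n = ee a b 0 n" by (simp add: R2_def ee_def)
  have Pf: "P N = iq a N * iq b N" for N
  proof (induction N)
    case 0 thus ?case by (simp add: P_def)
  next
    case (Suc N)
    have "P (Suc N) = P N * inverse ((1 - fps_const a * fps_X ^ Suc N) * (1 - fps_const b * fps_X ^ Suc N))"
      by (simp add: P_def prod.cl_ivl_Suc)
    thus ?case using Suc.IH by (simp add: iq_Suc fps_inverse_mult ac_simps)
  qed
  define SL where "SL = (\<lambda>N. \<Sum>n<N. L (Suc n))"
  define SR1 where "SR1 = (\<lambda>N. \<Sum>n<N. R1 (Suc n))"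
  define SR2 where "SR2 = (\<lambda>N. \<Sum>n<N. R2 n)"
  have sL: "stab SL" unfolding SL_def
  proof (rule stab_sum)
    fix n show "ordge (L (Suc n)) n" unfolding Lf
      by (rule ordge_mult_right, rule ordge_mult_right, rule ordge_mono[OF ordge_X]) simp
  qed
  have sR1: "stab SR1" unfolding SR1_def
  proof (rule stab_sum)
    fix n show "ordge (R1 (Suc n)) n" unfolding R1f
      by (rule ordge_mult_right, rule ordge_mono[OF ordge_ee]) (use le_choose2[of "Suc n"] in simp)
  qed
  have sR2: "stab SR2" unfolding SR2_def
  proof (rule stab_sum)
    fix n show "ordge (R2 n) n" unfolding R2f
      by (rule ordge_mono[OF ordge_ee le_choose2])
  qed
  have sP: "stab P"
  proof (rule stabI)
    fix n
    have eqP: "P (Suc n) - P n = - ((iq a n - iq a (Suc n)) * iq b (Suc n) + iq a n * (iq b n - iq b (Suc n)))"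
      unfolding Pf by (simp add: algebra_simps)
    have oP: "ordge ((iq a n - iq a (Suc n)) * iq b (Suc n) + iq a n * (iq b n - iq b (Suc n))) n"
      by (rule ordge_add, rule ordge_mult_right, rule ordge_mono[OF iq_diff], simp, simp,
          rule ordge_mult_left, rule ordge_mono[OF iq_diff], simp, simp)
    show "ordge (P (Suc n) - P n) n" unfolding eqP by (rule ordge_uminus[OF oP])
  qed
  define GL where "GL = Abs_fps (\<lambda>m. fps_nth (SL (Suc m)) m)"
  define G1 where "G1 = Abs_fps (\<lambda>m. fps_nth (SR1 (Suc m)) m)"
  define G2 where "G2 = Abs_fps (\<lambda>m. fps_nth (SR2 (Suc m)) m)"
  define GP where "GP = Abs_fps (\<lambda>m. fps_nth (P (Suc m)) m)"
  have 1: "(\<lambda>n. L (Suc n)) sums GL" unfolding sums_def GL_def using stab_lim[OF sL] by (simp add: SL_def)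
  have 2: "(\<lambda>n. R1 (Suc n)) sums G1" unfolding sums_def G1_def using stab_lim[OF sR1] by (simp add: SR1_def)
  have 3: "R2 sums G2" unfolding sums_def G2_def using stab_lim[OF sR2] by (simp add: SR2_def)
  have 4: "P \<longlonglongrightarrow> GP" unfolding GP_def using stab_lim[OF sP] .
  have eq: "1 + GL = fps_const (1 - inverse a) * (1 + G1) + fps_const (inverse a) * G2 * GP"
  proof (rule fps_ext)
    fix m
    define N where "N = Suc m"
    have ag1: "agree m (1 + GL) (1 + SL N)" unfolding GL_def N_def
      by (rule agree_add[OF agree_refl agree_stab[OF sL]])
    have ag2: "agree m (fps_const (1 - inverse a) * (1 + G1) + fps_const (inverse a) * G2 * GP)
        (fps_const (1 - inverse a) * (1 + SR1 N) + fps_const (inverse a) * SR2 N * P N)"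
      unfolding G1_def G2_def GP_def N_def
      by (rule agree_add[OF agree_mult[OF agree_refl agree_add[OF agree_refl agree_stab[OF sR1]]]
             agree_mult[OF agree_mult[OF agree_refl agree_stab[OF sR2]] agree_stab[OF sP]]])
    have SLY: "SL N = Y a b 0 N" by (simp add: SL_def Y_def Lf)
    have SR1s: "1 + SR1 N = (\<Sum>n<Suc N. ee a b 0 n * iq b n)"
      by (subst sum.lessThan_Suc_shift) (simp add: SR1_def R1f)
    have SR2s: "SR2 N = (\<Sum>n<N. ee a b 0 n)" by (simp add: SR2_def R2f)
    have "ordge ((1 + SL N) - (fps_const (1 - inverse a) * (1 + SR1 N) + fps_const (inverse a) * SR2 N * P N)) N"
      unfolding SLY SR1s SR2s Pf by (rule core[OF a0])
    hence "fps_nth ((1 + SL N) - (fps_const (1 - inverse a) * (1 + SR1 N) + fps_const (inverse a) * SR2 N * P N)) m = 0"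
      unfolding ordge_def N_def by blast
    hence h: "fps_nth (1 + SL N) m = fps_nth (fps_const (1 - inverse a) * (1 + SR1 N) + fps_const (inverse a) * SR2 N * P N) m"
      by (simp only: fps_sub_nth right_minus_eq)
    show "fps_nth (1 + GL) m = fps_nth (fps_const (1 - inverse a) * (1 + G1) + fps_const (inverse a) * G2 * GP) m"
      by (rule trans[OF ag1[unfolded agree_def, rule_format, OF order_refl]
               trans[OF h ag2[unfolded agree_def, rule_format, OF order_refl, symmetric]]])
  qed
  have s1: "(\<Sum>n. L (Suc n)) = GL" by (rule sums_unique[OF 1, symmetric])
  have s2: "(\<Sum>n. R1 (Suc n)) = G1" by (rule sums_unique[OF 2, symmetric])
  have s3: "(\<Sum>n. R2 n) = G2" by (rule sums_unique[OF 3, symmetric])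
  have s4: "lim P = GP" by (rule limI[OF 4])
  show ?thesis
  proof (intro conjI)
    show "summable (\<lambda>n. L (Suc n))" by (rule sums_summable[OF 1])
    show "summable (\<lambda>n. R1 (Suc n))" by (rule sums_summable[OF 2])
    show "summable R2" by (rule sums_summable[OF 3])
    show "convergent P" by (rule convergentI[OF 4])
    show "1 + (\<Sum>n. L (Suc n)) = fps_const (1 - inverse a) * (1 + (\<Sum>n. R1 (Suc n))) + fps_const (inverse a) * (\<Sum>n. R2 n) * lim P"
      unfolding s1 s2 s3 s4 by (rule eq)
  qed
qed

end
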